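(* Let $A\times_{(\alpha,\beta)}B$ and $A'\times_{(\alpha',\beta')}B'$ be knit products of groups and let $f:A\to A'$, $g:B\to B'$, $\varphi:B\to A'$, $\psi:A\to B'$ be maps such that for all $a,a_1,a_2\in A$ and $b,b_1,b_2\in B$: (f) $\varphi(b_1b_2)=\varphi(b_1)\,\alpha'_{g(b_1)}(\varphi(b_2))$ and $\psi(a_1a_2)=\beta'^{f(a_2)}(\psi(a_1))\,\psi(a_2)$; (g) $f(a_1a_2)=f(a_1)\,\alpha'_{\psi(a_1)}(f(a_2))$ and $g(b_1b_2)=\beta'^{\varphi(b_2)}(g(b_1))\,g(b_2)$; (h) $f(\alpha_{b}(a))\,\alpha'_{\psi(\alpha_{b}(a))}\bigl(\varphi(\beta^{a}(b))\bigr)=\varphi(b)\,\alpha'_{g(b)}(f(a))$ and $\beta'^{\varphi(\beta^{a}(b))}\bigl(\psi(\alpha_{b}(a))\bigr)\,g(\beta^{a}(b))=\beta'^{f(a)}(g(b))\,\psi(a)$. Define $\Phi=(\Phi_1,\Phi_2):A\times_{(\alpha,\beta)}B\to A'\times_{(\alpha',\beta')}B'$ by $$\Phi_1(a,b)=f(a)\,\alpha'_{\psi(a)}(\varphi(b)),\qquad \Phi_2(a,b)=\beta'^{\varphi(b)}(\psi(a))\,g(b).$$ Then $\Phi$ is a group homomorphism. Moreover, if $f$ and $g$ are group homomorphisms, condition (g) may be replaced by: $f(a_2)=\alpha'_{\psi(a_1)}(f(a_2))$ and $g(b_1)=\beta'^{\varphi(b_2)}(g(b_1))$ for all $a_1,a_2\in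 A$, $b_1,b_2\in B$.
   Context: For groups $A$, $B$ (units denoted $e$), an automorphically knitted pair of actions $(\alpha,\beta)$ for $(A,B)$ consists of maps $\alpha:B\times A\to A$ and $\beta:B\times A\to B$, written $\alpha_b(a):=\alpha(b,a)$ and $\beta^a(b):=\beta(b,a)$, such that: (1) each $\alpha_b$ is a bijection of $A$, $\alpha_{b_1}\circ\alpha_{b_2}=\alpha_{b_1b_2}$, $\alpha_e=\mathrm{Id}_A$; (2) each $\beta^a$ is a bijection of $B$, $\beta^{a_1}\circ\beta^{a_2}=\beta^{a_2a_1}$, $\beta^e=\mathrm{Id}_B$; (3) $\alpha_b(a_1a_2)=\alpha_b(a_1)\,\alpha_{\beta^{a_1}(b)}(a_2)$; (4) $\beta^a(b_1b_2)=\beta^{\alpha_{b_2}(a)}(b_1)\,\beta^a(b_2)$. The knit product $A\times_{(\alpha,\beta)}B$ is the group on the set $A\times B$ with multiplication $(a_1,b_1)\cdot(a_2,b_2)=(a_1\alpha_{b_1}(a_2),\ \beta^{a_2}(b_1)b_2)$; likewise $A'\times_{(\alpha',\beta')}B'$ for an automorphically knitted pair $(\alpha',\beta')$ for groups $(A',B')$, with $\alpha'_{b'}(a')=\alpha'(b',a')$, $\beta'^{a'}(b')=\beta'(b',a')$. *)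

theory Defs
  imports "HOL-Algebra.Group"
begin

text \<open>We write \<open>\<alpha> b a\<close> for \<open>\<alpha>_b(a)\<close>
  and \<open>\<beta> b a\<close> for \<open>\<beta>^a(b)\<close>, i.e. both maps take their arguments in the order
  \<open>B \<times> A\<close>, as in the paper.\<close>

definition knitted_pair ::
  "('a, 'm) monoid_scheme \<Rightarrow> ('b, 'n) monoid_scheme \<Rightarrow>
   ('b \<Rightarrow> 'a \<Rightarrow> 'a) \<Rightarrow> ('b \<Rightarrow> 'a \<Rightarrow> 'b) \<Rightarrow> bool" where
  "knitted_pair A B \<alpha> \<beta> \<longleftrightarrow>
     (\<forall>b\<in>carrier B. bij_betw (\<alpha> b) (carrier A) (carrier A)) \<and>
     (\<forall>b1\<in>carrier B. \<forall>b2\<in>carrier B. \<forall>a\<in>carrier A.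
        \<alpha> b1 (\<alpha> b2 a) = \<alpha> (b1 \<otimes>\<^bsub>B\<^esub> b2) a) \<and>
     (\<forall>a\<in>carrier A. \<alpha> \<one>\<^bsub>B\<^esub> a = a) \<and>
     (\<forall>a\<in>carrier A. bij_betw (\<lambda>b. \<beta> b a) (carrier B) (carrier B)) \<and>
     (\<forall>a1\<in>carrier A. \<forall>a2\<in>carrier A. \<forall>b\<in>carrier B.
        \<beta> (\<beta> b a2) a1 = \<beta> b (a2 \<otimes>\<^bsub>A\<^esub> a1)) \<and>
     (\<forall>b\<in>carrier B. \<beta> b \<one>\<^bsub>A\<^esub> = b) \<and>
     (\<forall>b\<in>carrier B. \<forall>a1\<in>carrier A. \<forall>a2\<in>carrier A.
        \<alpha> b (a1 \<otimes>\<^bsub>A\<^esub> a2) = \<alpha> b a1 \<otimes>\<^bsub>A\<^esub> \<alpha> (\<beta> b a1) a2) \<and>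
     (\<forall>a\<in>carrier A. \<forall>b1\<in>carrier B. \<forall>b2\<in>carrier B.
        \<beta> (b1 \<otimes>\<^bsub>B\<^esub> b2) a = \<beta> b1 (\<alpha> b2 a) \<otimes>\<^bsub>B\<^esub> \<beta> b2 a)"

definition knit_prod ::
  "('a, 'm) monoid_scheme \<Rightarrow> ('b, 'n) monoid_scheme \<Rightarrow>
   ('b \<Rightarrow> 'a \<Rightarrow> 'a) \<Rightarrow> ('b \<Rightarrow> 'a \<Rightarrow> 'b) \<Rightarrow> ('a \<times> 'b) monoid" where
  "knit_prod A B \<alpha> \<beta> =
     \<lparr> carrier = carrier A \<times> carrier B,
       mult = (\<lambda>(a1, b1) (a2, b2). (a1 \<otimes>\<^bsub>A\<^esub> \<alpha> b1 a2, \<beta> b1 a2 \<otimes>\<^bsub>B\<^esub> b2)),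
       one = (\<one>\<^bsub>A\<^esub>, \<one>\<^bsub>B\<^esub>) \<rparr>"

end

theory Submission
  imports Defs
begin

lemma kp_alpha_closed:
  assumes "knitted_pair A B \<alpha> \<beta>" "b \<in> carrier B" "a \<in> carrier A"
  shows "\<alpha> b a \<in> carrier A"
  using assms unfolding knitted_pair_def by (meson bij_betw_apply)

lemma kp_beta_closed:
  assumes "knitted_pair A B \<alpha> \<beta>" "b \<in> carrier B" "a \<in> carrier A"
  shows "\<beta> b a \<in> carrier B"
proof -
  have "bij_betw (\<lambda>b. \<beta> b a) (carrier B) (carrier B)"
    using assms unfolding knitted_pair_def by blast
  thus ?thesis using assms(2) by (meson bij_betw_apply)
qed

lemma knit_mult:
  "(a1, b1) \<otimes>\<^bsub>knit_prod A B \<alpha> \<beta>\<^esub> (a2, b2) = (a1 \<otimes>\<^bsub>A\<^esub> \<alpha> b1 a2, \<beta> b1 a2 \<otimes>\<^bsub>B\<^esub> b2)"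
  by (simp add: knit_prod_def)

lemma knit_carrier: "carrier (knit_prod A B \<alpha> \<beta>) = carrier A \<times> carrier B"
  by (simp add: knit_prod_def)

lemma knit_assoc:
  assumes gA: "group A" and gB: "group B" and kp: "knitted_pair A B \<alpha> \<beta>"
    and x: "x \<in> carrier A \<times> carrier B" and y: "y \<in> carrier A \<times> carrier B"
    and z: "z \<in> carrier A \<times> carrier B"
  shows "(x \<otimes>\<^bsub>knit_prod A B \<alpha> \<beta>\<^esub> y) \<otimes>\<^bsub>knit_prod A B \<alpha> \<beta>\<^esub> z
       = x \<otimes>\<^bsub>knit_prod A B \<alpha> \<beta>\<^esub> (y \<otimes>\<^bsub>knit_prod A B \<alpha> \<beta>\<^esub> z)"
proof -
  interpret A: group A by fact
  interpret B: group B by fact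
  obtain a1 b1 where 1: "x = (a1, b1)" "a1 \<in> carrier A" "b1 \<in> carrier B" using x by auto
  obtain a2 b2 where 2: "y = (a2, b2)" "a2 \<in> carrier A" "b2 \<in> carrier B" using y by auto
  obtain a3 b3 where 3: "z = (a3, b3)" "a3 \<in> carrier A" "b3 \<in> carrier B" using z by auto
  note cl = kp_alpha_closed[OF kp] kp_beta_closed[OF kp]
  have m3: "\<forall>b\<in>carrier B. \<forall>a1\<in>carrier A. \<forall>a2\<in>carrier A.
        \<alpha> b (a1 \<otimes>\<^bsub>A\<^esub> a2) = \<alpha> b a1 \<otimes>\<^bsub>A\<^esub> \<alpha> (\<beta> b a1) a2"
   and m4: "\<forall>a\<in>carrier A. \<forall>b1\<in>carrier B. \<forall>b2\<in>carrier B.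
        \<beta> (b1 \<otimes>\<^bsub>B\<^esub> b2) a = \<beta> b1 (\<alpha> b2 a) \<otimes>\<^bsub>B\<^esub> \<beta> b2 a"
   and m1: "\<forall>b1\<in>carrier B. \<forall>b2\<in>carrier B. \<forall>a\<in>carrier A.
        \<alpha> b1 (\<alpha> b2 a) = \<alpha> (b1 \<otimes>\<^bsub>B\<^esub> b2) a"
   and m2: "\<forall>a1\<in>carrier A. \<forall>a2\<in>carrier A. \<forall>b\<in>carrier B.
        \<beta> (\<beta> b a2) a1 = \<beta> b (a2 \<otimes>\<^bsub>A\<^esub> a1)"
    using kp unfolding knitted_pair_def by blast+
  have e1: "\<alpha> b1 (a2 \<otimes>\<^bsub>A\<^esub> \<alpha> b2 a3) = \<alpha> b1 a2 \<otimes>\<^bsub>A\<^esub> \<alpha> (\<beta> b1 a2 \<otimes>\<^bsub>B\<^esub> b2) a3"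
    using m3 m1 1 2 3 cl by simp
  have e2: "\<beta> (\<beta> b1 a2 \<otimes>\<^bsub>B\<^esub> b2) a3 = \<beta> b1 (a2 \<otimes>\<^bsub>A\<^esub> \<alpha> b2 a3) \<otimes>\<^bsub>B\<^esub> \<beta> b2 a3"
    using m4 m2 1 2 3 cl by simp
  show ?thesis using 1 2 3 cl e1 e2 by (simp add: knit_mult A.m_assoc B.m_assoc)
qed

theorem theorem2p5:
  fixes A :: "('a, 'm) monoid_scheme" and B :: "('b, 'n) monoid_scheme"
    and A' :: "('c, 'o) monoid_scheme" and B' :: "('d, 'p) monoid_scheme"
    and \<alpha> :: "'b \<Rightarrow> 'a \<Rightarrow> 'a" and \<beta> :: "'b \<Rightarrow> 'a \<Rightarrow> 'b"
    and \<alpha>' :: "'d \<Rightarrow> 'c \<Rightarrow> 'c" and \<beta>' :: "'d \<Rightarrow> 'c \<Rightarrow> 'd"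
    and f :: "'a \<Rightarrow> 'c" and g :: "'b \<Rightarrow> 'd" and \<phi> :: "'b \<Rightarrow> 'c" and \<psi> :: "'a \<Rightarrow> 'd"
  assumes grpA: "group A" and grpB: "group B" and grpA': "group A'" and grpB': "group B'"
    and kp: "knitted_pair A B \<alpha> \<beta>" and kp': "knitted_pair A' B' \<alpha>' \<beta>'"
    and f_map: "f \<in> carrier A \<rightarrow> carrier A'" and g_map: "g \<in> carrier B \<rightarrow> carrier B'"
    and \<phi>_map: "\<phi> \<in> carrier B \<rightarrow> carrier A'" and \<psi>_map: "\<psi> \<in> carrier A \<rightarrow> carrier B'"
    and cond_f1: "\<And>b1 b2. b1 \<in> carrier B \<Longrightarrow> b2 \<in> carrier B \<Longrightarrow>
        \<phi> (b1 \<otimes>\<^bsub>B\<^esub> b2) = \<phi> b1 \<otimes>\<^bsub>A'\<^esub> \<alpha>' (g b1) (\<phi> b2)"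
    and cond_f2: "\<And>a1 a2. a1 \<in> carrier A \<Longrightarrow> a2 \<in> carrier A \<Longrightarrow>
        \<psi> (a1 \<otimes>\<^bsub>A\<^esub> a2) = \<beta>' (\<psi> a1) (f a2) \<otimes>\<^bsub>B'\<^esub> \<psi> a2"
    and cond_h1: "\<And>a b. a \<in> carrier A \<Longrightarrow> b \<in> carrier B \<Longrightarrow>
        f (\<alpha> b a) \<otimes>\<^bsub>A'\<^esub> \<alpha>' (\<psi> (\<alpha> b a)) (\<phi> (\<beta> b a)) = \<phi> b \<otimes>\<^bsub>A'\<^esub> \<alpha>' (g b) (f a)"
    and cond_h2: "\<And>a b. a \<in> carrier A \<Longrightarrow> b \<in> carrier B \<Longrightarrow>
        \<beta>' (\<psi> (\<alpha> b a)) (\<phi> (\<beta> b a)) \<otimes>\<^bsub>B'\<^esub> g (\<beta> b a) = \<beta>' (g b) (f a) \<otimes>\<^bsub>B'\<^esub> \<psi> a"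
  shows
    "((\<forall>a1\<in>carrier A. \<forall>a2\<in>carrier A.
          f (a1 \<otimes>\<^bsub>A\<^esub> a2) = f a1 \<otimes>\<^bsub>A'\<^esub> \<alpha>' (\<psi> a1) (f a2)) \<and>
      (\<forall>b1\<in>carrier B. \<forall>b2\<in>carrier B.
          g (b1 \<otimes>\<^bsub>B\<^esub> b2) = \<beta>' (g b1) (\<phi> b2) \<otimes>\<^bsub>B'\<^esub> g b2)
      \<longrightarrow> (\<lambda>(a, b). (f a \<otimes>\<^bsub>A'\<^esub> \<alpha>' (\<psi> a) (\<phi> b), \<beta>' (\<psi> a) (\<phi> b) \<otimes>\<^bsub>B'\<^esub> g b))
            \<in> hom (knit_prod A B \<alpha> \<beta>) (knit_prod A' B' \<alpha>' \<beta>'))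
     \<and>
     (f \<in> hom A A' \<and> g \<in> hom B B' \<and>
      (\<forall>a1\<in>carrier A. \<forall>a2\<in>carrier A. f a2 = \<alpha>' (\<psi> a1) (f a2)) \<and>
      (\<forall>b1\<in>carrier B. \<forall>b2\<in>carrier B. g b1 = \<beta>' (g b1) (\<phi> b2))
      \<longrightarrow> (\<lambda>(a, b). (f a \<otimes>\<^bsub>A'\<^esub> \<alpha>' (\<psi> a) (\<phi> b), \<beta>' (\<psi> a) (\<phi> b) \<otimes>\<^bsub>B'\<^esub> g b))
            \<in> hom (knit_prod A B \<alpha> \<beta>) (knit_prod A' B' \<alpha>' \<beta>'))"
proof -
  interpret A: group A by (rule grpA)
  interpret B: group B by (rule grpB)
  interpret A': group A' by (rule grpA')
  interpret B': group B' by (rule grpB')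
  let ?G = "knit_prod A B \<alpha> \<beta>"
  let ?G' = "knit_prod A' B' \<alpha>' \<beta>'"
  let ?\<Phi> = "(\<lambda>(a, b). (f a \<otimes>\<^bsub>A'\<^esub> \<alpha>' (\<psi> a) (\<phi> b), \<beta>' (\<psi> a) (\<phi> b) \<otimes>\<^bsub>B'\<^esub> g b))"
  define F where "F a = (f a, \<psi> a)" for a
  define H where "H b = (\<phi> b, g b)" for b
  note cl = kp_alpha_closed[OF kp] kp_beta_closed[OF kp]
  note cl' = kp_alpha_closed[OF kp'] kp_beta_closed[OF kp']
  have Fc: "F a \<in> carrier A' \<times> carrier B'" if "a \<in> carrier A" for a
    using that f_map \<psi>_map by (auto simp: F_def)
  have Hc: "H b \<in> carrier A' \<times> carrier B'" if "b \<in> carrier B" for b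
    using that g_map \<phi>_map by (auto simp: H_def)
  have PhiFH: "?\<Phi> (a, b) = F a \<otimes>\<^bsub>?G'\<^esub> H b" for a b
    by (simp add: F_def H_def knit_mult)
  have FH: "F (\<alpha> b a) \<otimes>\<^bsub>?G'\<^esub> H (\<beta> b a) = H b \<otimes>\<^bsub>?G'\<^esub> F a"
    if "a \<in> carrier A" "b \<in> carrier B" for a b
    using cond_h1[OF that] cond_h2[OF that] by (simp add: F_def H_def knit_mult)
  have Hhom: "H (b1 \<otimes>\<^bsub>B\<^esub> b2) = H b1 \<otimes>\<^bsub>?G'\<^esub> H b2"
    if "b1 \<in> carrier B" "b2 \<in> carrier B"
      "\<forall>b1\<in>carrier B. \<forall>b2\<in>carrier B.
          g (b1 \<otimes>\<^bsub>B\<^esub> b2) = \<beta>' (g b1) (\<phi> b2) \<otimes>\<^bsub>B'\<^esub> g b2" for b1 b2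
    using cond_f1[OF that(1,2)] that by (simp add: H_def knit_mult)
  have Fhom: "F (a1 \<otimes>\<^bsub>A\<^esub> a2) = F a1 \<otimes>\<^bsub>?G'\<^esub> F a2"
    if "a1 \<in> carrier A" "a2 \<in> carrier A"
      "\<forall>a1\<in>carrier A. \<forall>a2\<in>carrier A.
          f (a1 \<otimes>\<^bsub>A\<^esub> a2) = f a1 \<otimes>\<^bsub>A'\<^esub> \<alpha>' (\<psi> a1) (f a2)" for a1 a2
    using cond_f2[OF that(1,2)] that by (simp add: F_def knit_mult)
  note as' = knit_assoc[OF grpA' grpB' kp']
  have mc: "u \<otimes>\<^bsub>?G'\<^esub> v \<in> carrier A' \<times> carrier B'"
    if "u \<in> carrier A' \<times> carrier B'" "v \<in> carrier A' \<times> carrier B'" for u v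
    using that cl' by (auto simp: knit_mult)
  have part1: "?\<Phi> \<in> hom ?G ?G'"
    if gf: "\<forall>a1\<in>carrier A. \<forall>a2\<in>carrier A.
          f (a1 \<otimes>\<^bsub>A\<^esub> a2) = f a1 \<otimes>\<^bsub>A'\<^esub> \<alpha>' (\<psi> a1) (f a2)"
      and gg: "\<forall>b1\<in>carrier B. \<forall>b2\<in>carrier B.
          g (b1 \<otimes>\<^bsub>B\<^esub> b2) = \<beta>' (g b1) (\<phi> b2) \<otimes>\<^bsub>B'\<^esub> g b2"
  proof (rule homI)
    fix x assume "x \<in> carrier ?G"
    then obtain a b where x: "x = (a, b)" "a \<in> carrier A" "b \<in> carrier B"
      by (auto simp: knit_carrier)
    show "?\<Phi> x \<in> carrier ?G'"
    proof -
      have "f a \<in> carrier A'" "\<psi> a \<in> carrier B'" "\<phi> b \<in> carrier A'" "g b \<in> carrier B'"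
        using x f_map g_map \<phi>_map \<psi>_map by auto
      thus ?thesis using x cl' by (auto simp: knit_carrier)
    qed
  next
    fix x y assume "x \<in> carrier ?G" "y \<in> carrier ?G"
    then obtain a1 b1 a2 b2 where x: "x = (a1, b1)" "a1 \<in> carrier A" "b1 \<in> carrier B"
      and y: "y = (a2, b2)" "a2 \<in> carrier A" "b2 \<in> carrier B"
      by (auto simp: knit_carrier)
    have "?\<Phi> (x \<otimes>\<^bsub>?G\<^esub> y) = F (a1 \<otimes>\<^bsub>A\<^esub> \<alpha> b1 a2) \<otimes>\<^bsub>?G'\<^esub> H (\<beta> b1 a2 \<otimes>\<^bsub>B\<^esub> b2)"
      using x y by (simp add: knit_mult F_def H_def)
    also have "\<dots> = (F a1 \<otimes>\<^bsub>?G'\<^esub> F (\<alpha> b1 a2)) \<otimes>\<^bsub>?G'\<^esub> (H (\<beta> b1 a2) \<otimes>\<^bsub>?G'\<^esub> H b2)"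
      using Fhom[OF x(2) cl(1)[OF x(3) y(2)] gf] Hhom[OF cl(2)[OF x(3) y(2)] y(3) gg] by simp
    also have "\<dots> = F a1 \<otimes>\<^bsub>?G'\<^esub> ((F (\<alpha> b1 a2) \<otimes>\<^bsub>?G'\<^esub> H (\<beta> b1 a2)) \<otimes>\<^bsub>?G'\<^esub> H b2)"
    proof -
      have c: "F a1 \<in> carrier A' \<times> carrier B'" "H b2 \<in> carrier A' \<times> carrier B'"
        "F (\<alpha> b1 a2) \<in> carrier A' \<times> carrier B'" "H (\<beta> b1 a2) \<in> carrier A' \<times> carrier B'"
        using x y cl Fc Hc by auto
      show ?thesis using c mc as' by metis
    qed
    also have "\<dots> = F a1 \<otimes>\<^bsub>?G'\<^esub> ((H b1 \<otimes>\<^bsub>?G'\<^esub> F a2) \<otimes>\<^bsub>?G'\<^esub> H b2)"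
      using FH[OF y(2) x(3)] by simp
    also have "\<dots> = (F a1 \<otimes>\<^bsub>?G'\<^esub> H b1) \<otimes>\<^bsub>?G'\<^esub> (F a2 \<otimes>\<^bsub>?G'\<^esub> H b2)"
    proof -
      have c: "F a1 \<in> carrier A' \<times> carrier B'" "H b1 \<in> carrier A' \<times> carrier B'"
        "F a2 \<in> carrier A' \<times> carrier B'" "H b2 \<in> carrier A' \<times> carrier B'"
        using x y Fc Hc by auto
      have m: "u \<otimes>\<^bsub>?G'\<^esub> v \<in> carrier A' \<times> carrier B'"
        if "u \<in> carrier A' \<times> carrier B'" "v \<in> carrier A' \<times> carrier B'" for u v
        using that cl' by (auto simp: knit_mult)
      show ?thesis using c m as' by metis
    qed
    also have "\<dots> = ?\<Phi> x \<otimes>\<^bsub>?G'\<^esub> ?\<Phi> y"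
      using x y PhiFH[of a1 b1] PhiFH[of a2 b2] by simp
    finally show "?\<Phi> (x \<otimes>\<^bsub>?G\<^esub> y) = ?\<Phi> x \<otimes>\<^bsub>?G'\<^esub> ?\<Phi> y" .
  qed
  have part2: "?\<Phi> \<in> hom ?G ?G'"
    if "f \<in> hom A A'" "g \<in> hom B B'"
      "\<forall>a1\<in>carrier A. \<forall>a2\<in>carrier A. f a2 = \<alpha>' (\<psi> a1) (f a2)"
      "\<forall>b1\<in>carrier B. \<forall>b2\<in>carrier B. g b1 = \<beta>' (g b1) (\<phi> b2)"
  proof (rule part1)
    show "\<forall>a1\<in>carrier A. \<forall>a2\<in>carrier A.
          f (a1 \<otimes>\<^bsub>A\<^esub> a2) = f a1 \<otimes>\<^bsub>A'\<^esub> \<alpha>' (\<psi> a1) (f a2)"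
      using that(1,3) by (metis hom_mult)
    show "\<forall>b1\<in>carrier B. \<forall>b2\<in>carrier B.
          g (b1 \<otimes>\<^bsub>B\<^esub> b2) = \<beta>' (g b1) (\<phi> b2) \<otimes>\<^bsub>B'\<^esub> g b2"
      using that(2,4) by (metis hom_mult)
  qed
  show ?thesis using part1 part2 by blast
qed

end
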